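(* Let $g$ be a function from strict partitions to $\mathbb{C}$ and let $\mu$ be a strict partition. Then for every $n\ge0$, $$\sum_{|\lambda/\mu|=n}2^{|\lambda|-|\mu|-\ell(\lambda)+\ell(\mu)}f_{\lambda/\mu}\,g(\lambda)=\sum_{k=0}^n\binom{n}{k}D^kg(\mu)$$ and $$D^ng(\mu)=\sum_{k=0}^n(-1)^{n+k}\binom{n}{k}\sum_{|\lambda/\mu|=k}2^{|\lambda|-|\mu|-\ell(\lambda)+\ell(\mu)}f_{\lambda/\mu}\,g(\lambda),$$ where $\sum_{|\lambda/\mu|=k}$ ranges over strict partitions $\lambda\supseteq\mu$ with $|\lambda|-|\mu|=k$. In particular, if there is a positive integer $r$ such that $D^rg(\lambda)=0$ for every strict partition $\lambda$, then the left-hand side of the first identity is a polynomial in $n$ of degree at most $r-1$.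
   Context: A strict partition is a finite strictly decreasing sequence of positive integers $\lambda=(\lambda_1>\cdots>\lambda_\ell)$ (the empty sequence is allowed); $|\lambda|=\sum_i\lambda_i$, $\ell(\lambda)=\ell$, and $\lambda_i=0$ for $i>\ell(\lambda)$. The (shifted Young) diagram of $\lambda$ is the set of boxes $(i,j)$ with $1\le i\le\ell(\lambda)$, $i+1\le j\le i+\lambda_i$; $\lambda$ is identified with its diagram. Write $\lambda\supseteq\mu$ if $\lambda_i\ge\mu_i$ for all $i$; $\lambda/\mu$ is the set of boxes of $\lambda$ not in $\mu$, and $|\lambda/\mu|=|\lambda|-|\mu|$. $f_{\lambda/\mu}$ is the number of standard shifted Young tableaux of shape $\lambda/\mu$, i.e. bijective fillings of the boxes of $\lambda/\mu$ with $1,\dots,|\lambda/\mu|$ increasing from left to right along rows and from top to bottom along columns ($f_{\mu/\mu}=1$). For a strict partition $\lambda$, $\lambda^+$ denotes any strict partition obtained from $\lambda$ by adding one box. The difference operator is $$Dg(\lambda)=\sum_{\lambda^+:\ \ell(\lambda^+)>\ell(\lambda)}g(\lambda^+)+2\sum_{\lambda^+:\ \ell(\lambda^+)=\ell(\lambda)}g(\lambda^+)-g(\lambda),$$ and $D^k$ is its $k$-th iterate ($D^0g=g$). *)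

theory Defs
  imports Complex_Main "HOL-Computational_Algebra.Polynomial"
begin

text \<open>Strict partitions are represented as lists of naturals, strictly decreasing,
  with all parts positive. The list entry xs!(i-1) is the part lambda_i (1-indexed).\<close>

definition strict_part :: "nat list \<Rightarrow> bool" where
  "strict_part xs \<longleftrightarrow> sorted_wrt (>) xs \<and> 0 \<notin> set xs"

definition part :: "nat list \<Rightarrow> nat \<Rightarrow> nat" where
  "part xs i = (if 1 \<le> i \<and> i \<le> length xs then xs ! (i - 1) else 0)"

definition psize :: "nat list \<Rightarrow> nat" where
  "psize xs = sum_list xs"

definition contains :: "nat list \<Rightarrow> nat list \<Rightarrow> bool" where
  "contains lam mu \<longleftrightarrow> (\<forall>i. part mu i \<le> part lam i)"

definition shifted_diagram :: "nat list \<Rightarrow> (nat \<times> nat) set" where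
  "shifted_diagram lam =
     {(i, j). 1 \<le> i \<and> i \<le> length lam \<and> i + 1 \<le> j \<and> j \<le> i + part lam i}"

definition skew_diagram :: "nat list \<Rightarrow> nat list \<Rightarrow> (nat \<times> nat) set" where
  "skew_diagram lam mu = shifted_diagram lam - shifted_diagram mu"

definition skew_tableaux :: "nat list \<Rightarrow> nat list \<Rightarrow> ((nat \<times> nat) \<Rightarrow> nat) set" where
  "skew_tableaux lam mu =
     {T. bij_betw T (skew_diagram lam mu) {1..psize lam - psize mu}
       \<and> (\<forall>x. x \<notin> skew_diagram lam mu \<longrightarrow> T x = 0)
       \<and> (\<forall>i j j'. (i, j) \<in> skew_diagram lam mu \<longrightarrow> (i, j') \<in> skew_diagram lam mu
              \<longrightarrow> j < j' \<longrightarrow> T (i, j) < T (i, j'))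
       \<and> (\<forall>i i' j. (i, j) \<in> skew_diagram lam mu \<longrightarrow> (i', j) \<in> skew_diagram lam mu
              \<longrightarrow> i < i' \<longrightarrow> T (i, j) < T (i', j))}"

definition f_skew :: "nat list \<Rightarrow> nat list \<Rightarrow> nat" where
  "f_skew lam mu = card (skew_tableaux lam mu)"

definition plus_one :: "nat list \<Rightarrow> nat list set" where
  "plus_one lam = {nu. strict_part nu \<and> contains nu lam \<and> psize nu = psize lam + 1}"

definition Dop :: "(nat list \<Rightarrow> complex) \<Rightarrow> nat list \<Rightarrow> complex" where
  "Dop g lam =
     (\<Sum>nu\<in>{nu \<in> plus_one lam. length nu > length lam}. g nu)
     + 2 * (\<Sum>nu\<in>{nu \<in> plus_one lam. length nu = length lam}. g nu)
     - g lam"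

definition skew_set :: "nat list \<Rightarrow> nat \<Rightarrow> nat list set" where
  "skew_set mu n = {lam. strict_part lam \<and> contains lam mu \<and> psize lam = psize mu + n}"

definition weighted_sum :: "(nat list \<Rightarrow> complex) \<Rightarrow> nat list \<Rightarrow> nat \<Rightarrow> complex" where
  "weighted_sum g mu n =
     (\<Sum>lam\<in>skew_set mu n.
        (2::complex) powi (int (psize lam) - int (psize mu) - int (length lam) + int (length mu))
        * of_nat (f_skew lam mu) * g lam)"

end

theory Submission
  imports Defs
begin


abbreviation "D \<equiv> shifted_diagram"

lemma strict_zf: "strict_part xs \<Longrightarrow> 0 \<notin> set xs" by (simp add: strict_part_def)

lemma part_pos_iff: "0 \<notin> set xs \<Longrightarrow> (0 < part xs i) \<longleftrightarrow> (1 \<le> i \<and> i \<le> length xs)"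
proof -
  assume z: "0 \<notin> set xs"
  show ?thesis
  proof (cases "1 \<le> i \<and> i \<le> length xs")
    case True
    hence "xs ! (i-1) \<in> set xs" by (intro nth_mem) auto
    with z True show ?thesis unfolding part_def by (metis neq0_conv)
  qed (auto simp: part_def)
qed

lemma part_zero: "\<not> (1 \<le> i \<and> i \<le> length xs) \<Longrightarrow> part xs i = 0"
  by (auto simp: part_def)

lemma D_mem: "0 \<notin> set xs \<Longrightarrow> (i,j) \<in> D xs \<longleftrightarrow> 1 \<le> i \<and> i + 1 \<le> j \<and> j \<le> i + part xs i"
  unfolding shifted_diagram_def using part_pos_iff[of xs i] by auto

lemma finite_D: "finite (D xs)"
proof -
  have "D xs \<subseteq> {0..length xs} \<times> {0..length xs + sum_list xs}"
  proof
    fix x assume "x \<in> D xs"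
    then obtain i j where x: "x = (i,j)" "1 \<le> i" "i \<le> length xs" "j \<le> i + part xs i"
      unfolding shifted_diagram_def by auto
    have "part xs i = xs ! (i-1)" using x by (simp add: part_def)
    also have "\<dots> \<le> sum_list xs" using x by (intro member_le_sum_list) auto
    finally show "x \<in> {0..length xs} \<times> {0..length xs + sum_list xs}" using x by auto
  qed
  thus ?thesis by (rule finite_subset) auto
qed



lemma strict_adj: "strict_part xs \<Longrightarrow> 1 \<le> k \<Longrightarrow> k + 1 \<le> length xs \<Longrightarrow> part xs (k+1) < part xs k"
  unfolding strict_part_def part_def
  by (auto simp: sorted_wrt_iff_nth_less)

lemma strict_of_part:
  assumes "\<And>k. 1 \<le> k \<Longrightarrow> k \<le> length xs \<Longrightarrow> 0 < part xs k"
    and "\<And>k. 1 \<le> k \<Longrightarrow> k + 1 \<le> length xs \<Longrightarrow> part xs (k+1) < part xs k"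
  shows "strict_part xs"
proof -
  have tr: "transp ((>) :: nat \<Rightarrow> nat \<Rightarrow> bool)" by (auto intro: transpI)
  have "sorted_wrt (>) xs"
    unfolding sorted_wrt_iff_nth_Suc_transp[OF tr]
  proof (intro allI impI)
    fix i assume "Suc i < length xs"
    with assms(2)[of "i+1"] show "xs ! i > xs ! Suc i" by (simp add: part_def)
  qed
  moreover have "0 \<notin> set xs"
  proof
    assume "0 \<in> set xs"
    then obtain i where "i < length xs" "xs ! i = 0" by (auto simp: in_set_conv_nth)
    with assms(1)[of "i+1"] show False by (simp add: part_def)
  qed
  ultimately show ?thesis by (simp add: strict_part_def)
qed

lemma colgap:
  assumes "strict_part xs" "1 \<le> a" "a \<le> b" "b \<le> length xs"
  shows "part xs b + (b - a) \<le> part xs a"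
  using assms(3,4)
proof (induction b rule: dec_induct)
  case base thus ?case by simp
next
  case (step n)
  have "part xs (n+1) < part xs n" using strict_adj[OF assms(1), of n] step assms(2) by auto
  with step show ?case by auto
qed

lemma contains_iff: "0 \<notin> set mu \<Longrightarrow> 0 \<notin> set lam \<Longrightarrow> contains lam mu \<longleftrightarrow> D mu \<subseteq> D lam"
proof
  assume z: "0 \<notin> set mu" "0 \<notin> set lam"
  { assume "contains lam mu" show "D mu \<subseteq> D lam"
    proof
      fix x assume "x \<in> D mu"
      then obtain i j where x: "x = (i,j)" "1 \<le> i" "i + 1 \<le> j" "j \<le> i + part mu i"
        using D_mem[OF z(1)] by (cases x) auto
      have "part mu i \<le> part lam i" using \<open>contains lam mu\<close> by (simp add: contains_def)
      with x show "x \<in> D lam" using D_mem[OF z(2)] by auto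
    qed }
  { assume s: "D mu \<subseteq> D lam"
    show "contains lam mu" unfolding contains_def
    proof
      fix i show "part mu i \<le> part lam i"
      proof (rule ccontr)
        assume "\<not> ?thesis"
        hence "0 < part mu i" by simp
        hence "1 \<le> i" using part_pos_iff[OF z(1)] by auto
        hence "(i, i + part mu i) \<in> D mu" using \<open>0 < part mu i\<close> z by (auto simp: D_mem)
        with s have "(i, i + part mu i) \<in> D lam" by auto
        with \<open>\<not> ?thesis\<close> z show False by (auto simp: D_mem)
      qed
    qed }
qed

lemma D_sigma: "D xs = (SIGMA i:{1..length xs}. {i+1..i+part xs i})"
  unfolding shifted_diagram_def by auto

lemma card_D: "card (D xs) = psize xs"
proof -
  have "card (D xs) = (\<Sum>i\<in>{1..length xs}. part xs i)"
    unfolding D_sigma by (subst card_SigmaI) auto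
  also have "\<dots> = (\<Sum>i\<in>Suc ` {..<length xs}. part xs i)"
    by (simp add: image_Suc_lessThan)
  also have "\<dots> = (\<Sum>i<length xs. xs ! i)"
    by (subst sum.reindex) (auto simp: part_def)
  also have "\<dots> = psize xs" by (simp add: psize_def sum_list_sum_nth atLeast0LessThan)
  finally show ?thesis .
qed

lemma D_inj:
  assumes z: "0 \<notin> set xs" "0 \<notin> set ys" and e: "D xs = D ys"
  shows "xs = ys"
proof -
  have p: "part xs i = part ys i" for i
    using contains_iff[OF z(1) z(2)] contains_iff[OF z(2) z(1)] e
    by (auto simp: contains_def intro: antisym)
  have l: "length xs = length ys"
  proof (rule ccontr)
    assume "length xs \<noteq> length ys"
    hence "length xs < length ys \<or> length ys < length xs" by arith
    thus False
    proof
      assume "length xs < length ys"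
      hence "0 < part ys (length ys)" "part xs (length ys) = 0"
        using part_pos_iff[OF z(2), of "length ys"] by (auto simp: part_def)
      with p show False by simp
    next
      assume "length ys < length xs"
      hence "0 < part xs (length xs)" "part ys (length xs) = 0"
        using part_pos_iff[OF z(1), of "length xs"] by (auto simp: part_def)
      with p show False by simp
    qed
  qed
  show ?thesis
  proof (rule nth_equalityI[OF l])
    fix i assume "i < length xs"
    with p[of "i+1"] l show "xs ! i = ys ! i" by (simp add: part_def)
  qed
qed

definition add_box :: "nat list \<Rightarrow> nat \<Rightarrow> nat list" where
  "add_box mu i = (if i \<le> length mu then mu[i-1 := mu!(i-1)+1] else mu @ [1])"

lemma add_box_len: "1 \<le> i \<Longrightarrow> i \<le> length mu + 1 \<Longrightarrow>
   length (add_box mu i) = (if i \<le> length mu then length mu else length mu + 1)"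
  by (simp add: add_box_def)

lemma add_box_part: "1 \<le> i \<Longrightarrow> i \<le> length mu + 1 \<Longrightarrow>
   part (add_box mu i) k = part mu k + (if k = i then 1 else 0)"
proof (cases "i \<le> length mu")
  case True
  assume "1 \<le> i"
  thus ?thesis using True by (auto simp: add_box_def part_def nth_list_update)
next
  case False
  assume "1 \<le> i" "i \<le> length mu + 1"
  hence i: "i = length mu + 1" using False by simp
  show ?thesis using i by (auto simp: add_box_def part_def nth_append)
qed



lemma part_le_succ: "strict_part xs \<Longrightarrow> 1 \<le> k \<Longrightarrow> part xs (k+1) \<le> part xs k"
proof -
  assume s: "strict_part xs" and k: "1 \<le> k"
  show ?thesis
  proof (cases "k + 1 \<le> length xs")
    case True thus ?thesis using strict_adj[OF s k] by simp
  next
    case False thus ?thesis by (simp add: part_def)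
  qed
qed

lemma new_box:
  assumes s: "strict_part mu" and i: "1 \<le> i" and j: "i + 1 \<le> j" and nb: "(i,j) \<notin> D mu"
    and left: "j \<ge> i + 2 \<Longrightarrow> (i,j-1) \<in> D mu"
    and up: "i \<ge> 2 \<Longrightarrow> (i-1,j) \<in> D mu"
  shows "i \<le> length mu + 1" "j = i + part mu i + 1" "strict_part (add_box mu i)"
    "D (add_box mu i) = insert (i,j) (D mu)"
proof -
  note z = strict_zf[OF s]
  have gt: "j > i + part mu i" using nb i j D_mem[OF z] by auto
  show jeq: "j = i + part mu i + 1"
  proof (cases "j \<ge> i + 2")
    case True
    with left have "j - 1 \<le> i + part mu i" using D_mem[OF z] by auto
    with gt show ?thesis by arith
  next
    case False
    with j gt show ?thesis by arith
  qed
  have upg: "part mu i + 1 < part mu (i-1) \<and> i - 1 \<le> length mu" if "i \<ge> 2"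
  proof -
    from up[OF that] have "j \<le> i - 1 + part mu (i-1)" using D_mem[OF z] by auto
    with jeq that have "part mu i + 1 < part mu (i-1)" by arith
    moreover have "i - 1 \<le> length mu" using calculation part_pos_iff[OF z, of "i-1"] by auto
    ultimately show ?thesis by simp
  qed
  show il: "i \<le> length mu + 1"
    using upg i by (cases "i \<ge> 2") auto
  note pa = add_box_part[OF i il]
  note la = add_box_len[OF i il]
  have zf: "0 \<notin> set (add_box mu i)"
    using z by (auto simp: add_box_def set_update_subset_insert dest: subsetD[OF set_update_subset_insert])
  show "strict_part (add_box mu i)"
  proof (rule strict_of_part)
    fix k assume k: "1 \<le> k" "k \<le> length (add_box mu i)"
    show "0 < part (add_box mu i) k"
    proof (cases "k = i")
      case True thus ?thesis by (simp add: pa)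
    next
      case False
      with k la il have "k \<le> length mu" by (auto split: if_splits)
      with k part_pos_iff[OF z, of k] show ?thesis by (simp add: pa)
    qed
  next
    fix k assume k: "1 \<le> k" "k + 1 \<le> length (add_box mu i)"
    show "part (add_box mu i) (k+1) < part (add_box mu i) k"
    proof (cases "k + 1 = i")
      case True
      with upg[of] k have "part mu i + 1 < part mu (i-1)" by auto
      moreover have "i - 1 = k" using True by simp
      ultimately show ?thesis using True by (simp add: pa)
    next
      case False
      note F = False
      show ?thesis
      proof (cases "k = i")
        case True
        with part_le_succ[OF s k(1)] show ?thesis by (simp add: pa)
      next
        case False
        with F k la il have "k + 1 \<le> length mu" by (auto split: if_splits)
        with strict_adj[OF s k(1)] F False show ?thesis by (simp add: pa)
      qed
    qed
  qed
  show "D (add_box mu i) = insert (i,j) (D mu)"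
  proof (rule set_eqI)
    fix x :: "nat \<times> nat" obtain a b where x: "x = (a,b)" by (cases x)
    show "x \<in> D (add_box mu i) \<longleftrightarrow> x \<in> insert (i,j) (D mu)"
      unfolding x D_mem[OF zf] D_mem[OF z] insert_iff pa using jeq i
      by auto
  qed
qed



lemma up_in_D:
  assumes s: "strict_part nu" and ij: "(i,j) \<in> D nu" and i2: "i \<ge> 2"
  shows "(i-1, j) \<in> D nu"
proof -
  note z = strict_zf[OF s]
  from ij have ij': "1 \<le> i" "i + 1 \<le> j" "j \<le> i + part nu i" using D_mem[OF z] by auto
  hence "0 < part nu i" by simp
  hence "i \<le> length nu" using part_pos_iff[OF z] by auto
  from colgap[OF s _ _ this, of "i-1"] i2 have "part nu i + 1 \<le> part nu (i-1)" by auto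
  with ij' i2 show ?thesis using D_mem[OF z] by auto
qed

lemma left_in_D:
  assumes z: "0 \<notin> set nu" and ij: "(i,j) \<in> D nu" and j2: "j \<ge> i + 2"
  shows "(i, j-1) \<in> D nu"
  using ij j2 D_mem[OF z] by auto

lemma plus_one_char:
  assumes s: "strict_part mu" and nu: "nu \<in> plus_one mu"
  shows "\<exists>i. 1 \<le> i \<and> i \<le> length mu + 1 \<and> nu = add_box mu i
     \<and> D nu = insert (i, i + part mu i + 1) (D mu) \<and> (i, i + part mu i + 1) \<notin> D mu"
proof -
  from nu have sn: "strict_part nu" and c: "contains nu mu" and ps: "psize nu = psize mu + 1"
    by (auto simp: plus_one_def)
  note zm = strict_zf[OF s] and zn = strict_zf[OF sn]
  have sub: "D mu \<subseteq> D nu" using contains_iff[OF zm zn] c by simp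
  have "card (D nu - D mu) = 1"
    using card_Diff_subset[OF finite_subset[OF sub finite_D] sub] card_D ps by simp
  then obtain b where b: "D nu - D mu = {b}" by (auto simp: card_1_singleton_iff)
  obtain i j where bij: "b = (i,j)" by (cases b)
  have bn: "(i,j) \<in> D nu" and bm: "(i,j) \<notin> D mu" using b bij by auto
  have DN: "D nu = insert (i,j) (D mu)" using b bij sub by auto
  have i: "1 \<le> i" and j: "i + 1 \<le> j" using bn D_mem[OF zn] by auto
  have left: "(i, j-1) \<in> D mu" if "j \<ge> i + 2"
    using left_in_D[OF zn bn that] DN that by auto
  have up: "(i-1, j) \<in> D mu" if "i \<ge> 2"
    using up_in_D[OF sn bn that] DN that by auto
  note nb = new_box[OF s i j bm left up]
  have "nu = add_box mu i"
    using D_inj[OF zn strict_zf[OF nb(3)]] nb(4) DN by simp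
  thus ?thesis using i nb DN bm by auto
qed

lemma plus_one_len:
  assumes s: "strict_part mu" and nu: "nu \<in> plus_one mu"
  shows "length nu = length mu \<or> length nu = length mu + 1"
proof -
  obtain i where "1 \<le> i" "i \<le> length mu + 1" "nu = add_box mu i"
    using plus_one_char[OF s nu] by blast
  thus ?thesis using add_box_len[of i mu] by (cases "i \<le> length mu") auto
qed

lemma contains_trans: "contains a b \<Longrightarrow> contains b c \<Longrightarrow> contains a c"
  unfolding contains_def by (meson order_trans)



lemma col_in_D:
  assumes s: "strict_part nu" and ij: "(i,j) \<in> D nu" and "1 \<le> i'" "i' \<le> i" "i' + 1 \<le> j"
  shows "(i', j) \<in> D nu"
proof -
  note z = strict_zf[OF s]
  from ij have ij': "1 \<le> i" "i + 1 \<le> j" "j \<le> i + part nu i" using D_mem[OF z] by auto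
  hence "0 < part nu i" by simp
  hence "i \<le> length nu" using part_pos_iff[OF z] by auto
  from colgap[OF s assms(3,4) this] have "part nu i + (i - i') \<le> part nu i'" .
  with ij' assms show ?thesis using D_mem[OF z] by auto
qed

lemma row_in_D:
  assumes z: "0 \<notin> set nu" and ij: "(i,j) \<in> D nu" and "i + 1 \<le> j'" "j' \<le> j"
  shows "(i, j') \<in> D nu"
  using assms D_mem[OF z] by auto

lemma finite_tab: "finite (skew_tableaux lam mu)"
proof -
  let ?S = "skew_diagram lam mu" and ?N = "psize lam - psize mu"
  have "skew_tableaux lam mu \<subseteq> {f. \<forall>x. (x \<in> ?S \<longrightarrow> f x \<in> {0..?N}) \<and> (x \<notin> ?S \<longrightarrow> f x = 0)}"
  proof (rule subsetI, rule CollectI, intro allI conjI impI)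
    fix T x assume T: "T \<in> skew_tableaux lam mu"
    { assume "x \<in> ?S"
      hence "T x \<in> T ` ?S" by (rule imageI)
      with T show "T x \<in> {0..?N}" unfolding skew_tableaux_def bij_betw_def by auto }
    { assume "x \<notin> ?S" with T show "T x = 0" unfolding skew_tableaux_def by blast }
  qed
  moreover have "finite ?S" unfolding skew_diagram_def using finite_D by auto
  ultimately show ?thesis
    using finite_subset finite_set_of_finite_funs[of ?S "{0..?N}" 0] by blast
qed



lemma tabE:
  assumes "T \<in> skew_tableaux lam mu"
  shows "inj_on T (skew_diagram lam mu)" "T ` skew_diagram lam mu = {1..psize lam - psize mu}"
    "\<And>x. x \<notin> skew_diagram lam mu \<Longrightarrow> T x = 0"
    "\<And>i j j'. (i, j) \<in> skew_diagram lam mu \<Longrightarrow> (i, j') \<in> skew_diagram lam mu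
              \<Longrightarrow> j < j' \<Longrightarrow> T (i, j) < T (i, j')"
    "\<And>i i' j. (i, j) \<in> skew_diagram lam mu \<Longrightarrow> (i', j) \<in> skew_diagram lam mu
              \<Longrightarrow> i < i' \<Longrightarrow> T (i, j) < T (i', j)"
  using assms unfolding skew_tableaux_def bij_betw_def by blast+

lemma tabI:
  assumes "inj_on T (skew_diagram lam mu)" "T ` skew_diagram lam mu = {1..psize lam - psize mu}"
    "\<And>x. x \<notin> skew_diagram lam mu \<Longrightarrow> T x = 0"
    "\<And>i j j'. (i, j) \<in> skew_diagram lam mu \<Longrightarrow> (i, j') \<in> skew_diagram lam mu
              \<Longrightarrow> j < j' \<Longrightarrow> T (i, j) < T (i, j')"
    "\<And>i i' j. (i, j) \<in> skew_diagram lam mu \<Longrightarrow> (i', j) \<in> skew_diagram lam mu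
              \<Longrightarrow> i < i' \<Longrightarrow> T (i, j) < T (i', j)"
  shows "T \<in> skew_tableaux lam mu"
  using assms unfolding skew_tableaux_def bij_betw_def by blast

lemma tab_pos: "T \<in> skew_tableaux lam mu \<Longrightarrow> x \<in> skew_diagram lam mu \<Longrightarrow> 1 \<le> T x"
  using tabE(2)[of T lam mu] by (metis atLeastAtMost_iff image_eqI)

lemma fwd:
  assumes sl: "strict_part lam" and sm: "strict_part mu" and sn: "strict_part nu"
    and DN: "D nu = insert b (D mu)" and bm: "b \<notin> D mu" and cl: "D nu \<subseteq> D lam"
    and pn: "psize nu = psize mu + 1" and T': "T' \<in> skew_tableaux lam nu"
  shows "(\<lambda>x. if x \<in> skew_diagram lam mu then T' x + 1 else 0) \<in> skew_tableaux lam mu"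
proof -
  let ?S = "skew_diagram lam mu" and ?S' = "skew_diagram lam nu"
  define T where "T = (\<lambda>x. if x \<in> ?S then T' x + 1 else 0)"
  have bl: "b \<in> D lam" using cl DN by auto
  have SS: "?S = insert b ?S'" "b \<notin> ?S'" using DN bl bm cl unfolding skew_diagram_def by auto
  have Tb: "T b = 1" using SS tabE(3)[OF T'] by (simp add: T_def)
  have TS': "T x = T' x + 1" if "x \<in> ?S'" for x using that SS by (simp add: T_def)
  have card_le: "psize nu \<le> psize lam"
    using card_mono[OF finite_D cl] card_D by simp
  have inj: "inj_on T ?S"
  proof (rule inj_onI)
    fix x y assume xy: "x \<in> ?S" "y \<in> ?S" "T x = T y"
    show "x = y"
    proof (cases "x = b \<or> y = b")
      case True
      thus ?thesis using xy Tb TS' SS by (metis add_cancel_right_left insert_iff not_one_le_zero tab_pos[OF T'])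
    next
      case False
      hence "x \<in> ?S'" "y \<in> ?S'" using xy SS by auto
      thus ?thesis using xy TS' tabE(1)[OF T'] by (simp add: inj_on_def)
    qed
  qed
  have "T ` ?S = insert 1 (Suc ` (T' ` ?S'))"
    using SS Tb TS' by (auto simp: image_image)
  also have "\<dots> = {1..psize lam - psize mu}"
    using tabE(2)[OF T'] pn card_le by auto
  finally have img: "T ` ?S = {1..psize lam - psize mu}" .
  have row: "T (i, j) < T (i, j')" if a: "(i, j) \<in> ?S" "(i, j') \<in> ?S" "j < j'" for i j j'
  proof -
    have n2: "(i,j') \<noteq> b"
    proof
      assume e: "(i,j') = b"
      have n1: "(i,j) \<noteq> b" using e a(3) by auto
      have "(i,j) \<in> D lam" using a(1) unfolding skew_diagram_def by auto
      hence "i + 1 \<le> j" using D_mem[OF strict_zf[OF sl]] by auto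
      hence "(i,j) \<in> D nu" using row_in_D[OF strict_zf[OF sn], of i j' j] e DN a(3) by auto
      thus False using a(1) n1 DN unfolding skew_diagram_def by auto
    qed
    hence s2: "(i,j') \<in> ?S'" using a SS by auto
    show ?thesis
    proof (cases "(i,j) = b")
      case True thus ?thesis using Tb TS'[OF s2] tab_pos[OF T' s2] by simp
    next
      case False
      hence "(i,j) \<in> ?S'" using a SS by auto
      thus ?thesis using s2 TS' tabE(4)[OF T'] a(3) by simp
    qed
  qed
  have col: "T (i, j) < T (i', j)" if a: "(i, j) \<in> ?S" "(i', j) \<in> ?S" "i < i'" for i i' j
  proof -
    have n2: "(i',j) \<noteq> b"
    proof
      assume e: "(i',j) = b"
      have n1: "(i,j) \<noteq> b" using e a(3) by auto
      have "(i,j) \<in> D lam" using a(1) unfolding skew_diagram_def by auto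
      hence "1 \<le> i" "i + 1 \<le> j" using D_mem[OF strict_zf[OF sl]] by auto
      hence "(i,j) \<in> D nu" using col_in_D[OF sn, of i' j i] e DN a(3) by auto
      thus False using a(1) n1 DN unfolding skew_diagram_def by auto
    qed
    hence s2: "(i',j) \<in> ?S'" using a SS by auto
    show ?thesis
    proof (cases "(i,j) = b")
      case True thus ?thesis using Tb TS'[OF s2] tab_pos[OF T' s2] by simp
    next
      case False
      hence "(i,j) \<in> ?S'" using a SS by auto
      thus ?thesis using s2 TS' tabE(5)[OF T'] a(3) by simp
    qed
  qed
  have "T \<in> skew_tableaux lam mu"
    apply (rule tabI[OF inj img])
    subgoal by (simp add: T_def)
    subgoal by (rule row)
    subgoal by (rule col)
    done
  thus ?thesis by (simp add: T_def)
qed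



lemma bwd:
  assumes sl: "strict_part lam" and sm: "strict_part mu" and cl: "contains lam mu"
    and lt: "psize mu < psize lam" and T: "T \<in> skew_tableaux lam mu"
  shows "\<exists>nu b. nu \<in> plus_one mu \<and> contains lam nu \<and> strict_part nu \<and> D nu = insert b (D mu)
     \<and> b \<notin> D mu \<and> T b = 1 \<and> b \<in> skew_diagram lam mu \<and> (\<lambda>x. T x - 1) \<in> skew_tableaux lam nu"
proof -
  let ?S = "skew_diagram lam mu" and ?N = "psize lam - psize mu"
  note zl = strict_zf[OF sl] and zm = strict_zf[OF sm]
  have sub: "D mu \<subseteq> D lam" using contains_iff[OF zm zl] cl by simp
  have "1 \<in> T ` ?S" using tabE(2)[OF T] lt by auto
  then obtain b where bS: "b \<in> ?S" and Tb: "T b = 1" by auto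
  obtain i j where bij: "b = (i,j)" by (cases b)
  have bl: "(i,j) \<in> D lam" and bm: "(i,j) \<notin> D mu" using bS bij unfolding skew_diagram_def by auto
  have i: "1 \<le> i" and j: "i + 1 \<le> j" using bl D_mem[OF zl] by auto
  have left: "(i, j-1) \<in> D mu" if "j \<ge> i + 2"
  proof (rule ccontr)
    assume "(i, j-1) \<notin> D mu"
    moreover have "(i, j-1) \<in> D lam" using row_in_D[OF zl bl, of "j-1"] that by auto
    ultimately have "(i, j-1) \<in> ?S" unfolding skew_diagram_def by auto
    from tabE(4)[OF T this] bS bij that have "T (i,j-1) < T (i,j)" by auto
    with Tb bij tab_pos[OF T \<open>(i, j-1) \<in> ?S\<close>] show False by simp
  qed
  have up: "(i-1, j) \<in> D mu" if "i \<ge> 2"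
  proof (rule ccontr)
    assume "(i-1, j) \<notin> D mu"
    moreover have "(i-1, j) \<in> D lam" using col_in_D[OF sl bl, of "i-1"] that j by auto
    ultimately have "(i-1, j) \<in> ?S" unfolding skew_diagram_def by auto
    from tabE(5)[OF T this] bS bij that have "T (i-1,j) < T (i,j)" by auto
    with Tb bij tab_pos[OF T \<open>(i-1, j) \<in> ?S\<close>] show False by simp
  qed
  note nb = new_box[OF sm i j bm left up]
  define nu where "nu = add_box mu i"
  have sn: "strict_part nu" and DN: "D nu = insert b (D mu)" using nb bij by (auto simp: nu_def)
  note zn = strict_zf[OF sn]
  have cnm: "contains nu mu" using contains_iff[OF zm zn] DN by auto
  have cln: "contains lam nu" using contains_iff[OF zn zl] DN sub bl bij by auto
  have pn: "psize nu = psize mu + 1"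
    using card_D[of nu] card_D[of mu] DN bm bij finite_D[of mu] by simp
  have po: "nu \<in> plus_one mu" using sn cnm pn by (simp add: plus_one_def)
  have ple: "psize nu \<le> psize lam"
  proof -
    have "D nu \<subseteq> D lam" using contains_iff[OF zn zl] cln by simp
    from card_mono[OF finite_D this] show ?thesis by (simp add: card_D)
  qed
  have S': "skew_diagram lam nu = ?S - {b}" using DN unfolding skew_diagram_def by auto
  let ?T' = "\<lambda>x. T x - 1"
  have injT: "inj_on T ?S" using tabE(1)[OF T] .
  have "inj_on ?T' (skew_diagram lam nu)"
  proof (rule inj_onI)
    fix x y assume xy: "x \<in> skew_diagram lam nu" "y \<in> skew_diagram lam nu" "T x - 1 = T y - 1"
    hence "x \<in> ?S" "y \<in> ?S" using S' by auto
    moreover have "1 \<le> T x" "1 \<le> T y" using tab_pos[OF T] calculation by auto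
    ultimately have "T x = T y" using xy(3) by arith
    with injT \<open>x \<in> ?S\<close> \<open>y \<in> ?S\<close> show "x = y" by (simp add: inj_on_def)
  qed
  moreover have "?T' ` skew_diagram lam nu = {1..psize lam - psize nu}"
  proof -
    have "T ` (?S - {b}) = T ` ?S - T ` {b}"
      by (rule inj_on_image_set_diff[OF injT]) (use bS in auto)
    also have "\<dots> = {1..?N} - {1}" using tabE(2)[OF T] Tb by simp
    also have "\<dots> = Suc ` {1..psize lam - psize nu}" using pn ple by auto
    finally have e: "T ` (?S - {b}) = Suc ` {1..psize lam - psize nu}" .
    have "?T' ` skew_diagram lam nu = (\<lambda>k. k - 1) ` (T ` (?S - {b}))"
      unfolding S' by (simp add: image_image)
    also have "\<dots> = {1..psize lam - psize nu}" unfolding e image_image by simp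
    finally show ?thesis .
  qed
  moreover have "?T' x = 0" if "x \<notin> skew_diagram lam nu" for x
  proof (cases "x = b")
    case True thus ?thesis using Tb by simp
  next
    case False thus ?thesis using that S' tabE(3)[OF T, of x] by auto
  qed
  moreover have "?T' (i', j1) < ?T' (i', j2)"
    if "(i', j1) \<in> skew_diagram lam nu" "(i', j2) \<in> skew_diagram lam nu" "j1 < j2" for i' j1 j2
  proof -
    have "(i', j1) \<in> ?S" "(i', j2) \<in> ?S" using that S' by auto
    moreover have "T (i', j1) < T (i', j2)" using tabE(4)[OF T] calculation that(3) by blast
    moreover have "1 \<le> T (i', j1)" using tab_pos[OF T] calculation by blast
    ultimately show ?thesis by arith
  qed
  moreover have "?T' (i1, j') < ?T' (i2, j')"
    if "(i1, j') \<in> skew_diagram lam nu" "(i2, j') \<in> skew_diagram lam nu" "i1 < i2" for i1 i2 j'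
  proof -
    have "(i1, j') \<in> ?S" "(i2, j') \<in> ?S" using that S' by auto
    moreover have "T (i1, j') < T (i2, j')" using tabE(5)[OF T] calculation that(3) by blast
    moreover have "1 \<le> T (i1, j')" using tab_pos[OF T] calculation by blast
    ultimately show ?thesis by arith
  qed
  ultimately have "?T' \<in> skew_tableaux lam nu" by (rule tabI)
  thus ?thesis using po cln sn DN bm bij Tb bS by blast
qed



lemma len_le_sum: "0 \<notin> set xs \<Longrightarrow> length xs \<le> sum_list (xs :: nat list)"
  by (induction xs) (auto simp: Suc_le_eq)

lemma finite_skew_set: "finite (skew_set mu n)"
proof -
  let ?M = "psize mu + n"
  have "skew_set mu n \<subseteq> {xs. set xs \<subseteq> {0..?M} \<and> length xs \<le> ?M}"
  proof
    fix xs assume "xs \<in> skew_set mu n"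
    hence s: "strict_part xs" and p: "psize xs = ?M" by (auto simp: skew_set_def)
    have "length xs \<le> ?M" using len_le_sum[OF strict_zf[OF s]] p by (simp add: psize_def)
    moreover have "set xs \<subseteq> {0..?M}" using member_le_sum_list[of _ xs] p by (auto simp: psize_def)
    ultimately show "xs \<in> {xs. set xs \<subseteq> {0..?M} \<and> length xs \<le> ?M}" by simp
  qed
  thus ?thesis by (rule finite_subset) (rule finite_lists_length_le, simp)
qed

lemma plus_one_skew: "plus_one mu = skew_set mu 1"
  by (simp add: plus_one_def skew_set_def)

lemma finite_plus_one: "finite (plus_one mu)"
  using finite_skew_set plus_one_skew by metis

lemma fskew_rec:
  assumes sl: "strict_part lam" and sm: "strict_part mu" and cl: "contains lam mu"
    and lt: "psize mu < psize lam"
  shows "f_skew lam mu = (\<Sum>nu\<in>{nu \<in> plus_one mu. contains lam nu}. f_skew lam nu)"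
proof -
  let ?A = "{nu \<in> plus_one mu. contains lam nu}" and ?S = "skew_diagram lam mu"
  define F where "F = (\<lambda>(nu::nat list, T'::nat\<times>nat\<Rightarrow>nat). (\<lambda>x. if x \<in> ?S then T' x + 1 else 0))"
  note zl = strict_zf[OF sl] and zm = strict_zf[OF sm]
  have info: "\<exists>b. strict_part nu \<and> D nu = insert b (D mu) \<and> b \<notin> D mu \<and> D nu \<subseteq> D lam
     \<and> psize nu = psize mu + 1" if "nu \<in> ?A" for nu
  proof -
    from that have po: "nu \<in> plus_one mu" and c: "contains lam nu" by auto
    have sn: "strict_part nu" and pn: "psize nu = psize mu + 1" using po by (auto simp: plus_one_def)
    obtain i where "D nu = insert (i, i + part mu i + 1) (D mu)" "(i, i + part mu i + 1) \<notin> D mu"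
      using plus_one_char[OF sm po] by blast
    moreover have "D nu \<subseteq> D lam" using contains_iff[OF strict_zf[OF sn] zl] c by simp
    ultimately show ?thesis using sn pn by blast
  qed
  have into: "F p \<in> skew_tableaux lam mu" if P: "p \<in> Sigma ?A (skew_tableaux lam)" for p
  proof -
    obtain nu T' where p: "p = (nu, T')" "nu \<in> ?A" "T' \<in> skew_tableaux lam nu" using P by auto
    from info[OF p(2)] obtain b where b: "strict_part nu" "D nu = insert b (D mu)" "b \<notin> D mu"
      "D nu \<subseteq> D lam" "psize nu = psize mu + 1" by blast
    show ?thesis using fwd[OF sl sm b p(3)] p(1) by (simp add: F_def)
  qed
  have box1: "\<exists>b. F (nu, T') b = 1 \<and> b \<in> ?S \<and> D nu = insert b (D mu) \<and> skew_diagram lam nu \<subseteq> ?S"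
    if "nu \<in> ?A" "T' \<in> skew_tableaux lam nu" for nu T'
  proof -
    from info[OF that(1)] obtain b where b: "strict_part nu" "D nu = insert b (D mu)" "b \<notin> D mu"
      "D nu \<subseteq> D lam" "psize nu = psize mu + 1" by blast
    have bS: "b \<in> ?S" using b unfolding skew_diagram_def by auto
    have "b \<notin> skew_diagram lam nu" using b unfolding skew_diagram_def by auto
    hence "T' b = 0" using tabE(3)[OF that(2)] by simp
    moreover have "skew_diagram lam nu \<subseteq> ?S" using b unfolding skew_diagram_def by auto
    moreover have "F (nu, T') b = 1" using bS calculation(1) by (simp add: F_def)
    ultimately show ?thesis using bS b by blast
  qed
  have inj: "inj_on F (Sigma ?A (skew_tableaux lam))"
  proof (rule inj_onI)
    fix p q assume p: "p \<in> Sigma ?A (skew_tableaux lam)" and q: "q \<in> Sigma ?A (skew_tableaux lam)"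
      and e: "F p = F q"
    obtain nu1 T1 where p': "p = (nu1, T1)" "nu1 \<in> ?A" "T1 \<in> skew_tableaux lam nu1" using p by auto
    obtain nu2 T2 where q': "q = (nu2, T2)" "nu2 \<in> ?A" "T2 \<in> skew_tableaux lam nu2" using q by auto
    obtain b1 where b1: "F (nu1,T1) b1 = 1" "b1 \<in> ?S" "D nu1 = insert b1 (D mu)"
      "skew_diagram lam nu1 \<subseteq> ?S" using box1[OF p'(2,3)] by blast
    obtain b2 where b2: "F (nu2,T2) b2 = 1" "b2 \<in> ?S" "D nu2 = insert b2 (D mu)"
      "skew_diagram lam nu2 \<subseteq> ?S" using box1[OF q'(2,3)] by blast
    have injF: "inj_on (F p) ?S" using tabE(1)[OF into[OF p]] .
    have "b1 = b2" using inj_onD[OF injF _ b1(2) b2(2)] b1(1) b2(1) e p'(1) q'(1) by simp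
    hence "D nu1 = D nu2" using b1 b2 by simp
    have s1: "strict_part nu1" and s2: "strict_part nu2" using p'(2) q'(2) by (auto simp: plus_one_def)
    have nn: "nu1 = nu2" using D_inj[OF strict_zf[OF s1] strict_zf[OF s2] \<open>D nu1 = D nu2\<close>] .
    have "T1 = T2"
    proof
      fix x show "T1 x = T2 x"
      proof (cases "x \<in> ?S")
        case True
        from fun_cong[OF e, of x] True p'(1) q'(1) show ?thesis by (simp add: F_def)
      next
        case False
        hence "x \<notin> skew_diagram lam nu1" "x \<notin> skew_diagram lam nu2" using b1(4) b2(4) by auto
        thus ?thesis using tabE(3)[OF p'(3)] tabE(3)[OF q'(3)] by simp
      qed
    qed
    thus "p = q" using p'(1) q'(1) nn by simp
  qed
  have onto: "F ` Sigma ?A (skew_tableaux lam) = skew_tableaux lam mu"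
  proof
    show "F ` Sigma ?A (skew_tableaux lam) \<subseteq> skew_tableaux lam mu" using into by auto
  next
    show "skew_tableaux lam mu \<subseteq> F ` Sigma ?A (skew_tableaux lam)"
    proof
      fix T assume T: "T \<in> skew_tableaux lam mu"
      from bwd[OF sl sm cl lt T] obtain nu where nu: "nu \<in> plus_one mu" "contains lam nu"
        "(\<lambda>x. T x - 1) \<in> skew_tableaux lam nu" by blast
      have "F (nu, \<lambda>x. T x - 1) = T"
      proof
        fix x show "F (nu, \<lambda>x. T x - 1) x = T x"
        proof (cases "x \<in> ?S")
          case True thus ?thesis using tab_pos[OF T True] by (simp add: F_def)
        next
          case False thus ?thesis using tabE(3)[OF T False] by (simp add: F_def)
        qed
      qed
      moreover have "(nu, \<lambda>x. T x - 1) \<in> Sigma ?A (skew_tableaux lam)" using nu by auto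
      ultimately show "T \<in> F ` Sigma ?A (skew_tableaux lam)" by (metis image_eqI)
    qed
  qed
  have finA: "finite ?A" using finite_plus_one by auto
  have "f_skew lam mu = card (Sigma ?A (skew_tableaux lam))"
    unfolding f_skew_def using card_image[OF inj] onto by simp
  also have "\<dots> = (\<Sum>nu\<in>?A. f_skew lam nu)"
    using finA finite_tab by (simp add: f_skew_def)
  finally show ?thesis .
qed



definition cw :: "nat list \<Rightarrow> nat list \<Rightarrow> complex" where
  "cw mu nu = (2::complex) powi (int (psize nu) - int (psize mu) - int (length nu) + int (length mu))"

lemma psize_po: "nu \<in> plus_one mu \<Longrightarrow> psize nu = psize mu + 1"
  unfolding plus_one_def by blast

lemma E_rep:
  assumes s: "strict_part mu"
  shows "Dop h mu + h mu = (\<Sum>nu\<in>plus_one mu. cw mu nu * h nu)"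
proof -
  let ?L = "{nu \<in> plus_one mu. length nu > length mu}" and ?E = "{nu \<in> plus_one mu. length nu = length mu}"
  have un: "plus_one mu = ?L \<union> ?E"
  proof (rule set_eqI)
    fix x show "x \<in> plus_one mu \<longleftrightarrow> x \<in> ?L \<union> ?E"
      using plus_one_len[OF s, of x] by auto
  qed
  have fin: "finite ?L" "finite ?E" using finite_plus_one by auto
  have cL: "cw mu nu = 1" if "nu \<in> ?L" for nu
  proof -
    have "psize nu = psize mu + 1" "length nu = length mu + 1"
      using that plus_one_len[OF s, of nu] psize_po[of nu mu] by auto
    thus ?thesis by (simp add: cw_def)
  qed
  have cE: "cw mu nu = 2" if "nu \<in> ?E" for nu
  proof -
    have "psize nu = psize mu + 1" "length nu = length mu"
      using that psize_po[of nu mu] by auto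
    thus ?thesis by (simp add: cw_def)
  qed
  have "(\<Sum>nu\<in>plus_one mu. cw mu nu * h nu) = (\<Sum>nu\<in>?L \<union> ?E. cw mu nu * h nu)"
    using un by (rule arg_cong)
  also have "\<dots> = (\<Sum>nu\<in>?L. cw mu nu * h nu) + (\<Sum>nu\<in>?E. cw mu nu * h nu)"
    by (rule sum.union_disjoint[OF fin]) auto
  also have "\<dots> = (\<Sum>nu\<in>?L. h nu) + 2 * (\<Sum>nu\<in>?E. h nu)"
    using cL cE by (simp add: sum_distrib_left)
  finally show ?thesis by (simp add: Dop_def)
qed

lemma skew_set_0:
  assumes s: "strict_part mu"
  shows "skew_set mu 0 = {mu}"
proof
  show "skew_set mu 0 \<subseteq> {mu}"
  proof
    fix lam assume "lam \<in> skew_set mu 0"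
    hence sl: "strict_part lam" and c: "contains lam mu" and p: "psize lam = psize mu"
      by (auto simp: skew_set_def)
    have sub: "D mu \<subseteq> D lam" using contains_iff[OF strict_zf[OF s] strict_zf[OF sl]] c by simp
    have "D mu = D lam" using card_subset_eq[OF finite_D sub] card_D p by simp
    thus "lam \<in> {mu}" using D_inj[OF strict_zf[OF s] strict_zf[OF sl]] by simp
  qed
next
  show "{mu} \<subseteq> skew_set mu 0" using s by (simp add: skew_set_def contains_def)
qed

lemma f_skew_self: "f_skew mu mu = 1"
proof -
  have "skew_tableaux mu mu = {\<lambda>_. 0}"
    unfolding skew_tableaux_def skew_diagram_def by (auto simp: bij_betw_def)
  thus ?thesis by (simp add: f_skew_def)
qed

lemma W0: "strict_part mu \<Longrightarrow> weighted_sum g mu 0 = g mu"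
  by (simp add: weighted_sum_def skew_set_0 f_skew_self)

lemma W_suc:
  assumes s: "strict_part mu"
  shows "weighted_sum g mu (Suc n) = (\<Sum>nu\<in>plus_one mu. cw mu nu * weighted_sum g nu n)"
proof -
  define w where "w lam nu = (2::complex) powi (int (psize lam) - int (psize nu) - int (length lam) + int (length nu))" for lam nu
  have wsum: "weighted_sum g nu m = (\<Sum>lam\<in>skew_set nu m. w lam nu * of_nat (f_skew lam nu) * g lam)" for nu m
    by (simp add: weighted_sum_def w_def)
  have cww: "cw mu nu * w lam nu = w lam mu" for lam nu
  proof -
    have "cw mu nu * w lam nu = (2::complex) powi ((int (psize nu) - int (psize mu) - int (length nu) + int (length mu))
       + (int (psize lam) - int (psize nu) - int (length lam) + int (length nu)))"
      unfolding cw_def w_def by (rule power_int_add[symmetric]) simp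
    moreover have "(int (psize nu) - int (psize mu) - int (length nu) + int (length mu))
       + (int (psize lam) - int (psize nu) - int (length lam) + int (length nu))
       = int (psize lam) - int (psize mu) - int (length lam) + int (length mu)" by simp
    ultimately show ?thesis by (simp only: w_def)
  qed
  have sset: "skew_set nu n = {lam \<in> skew_set mu (Suc n). lam \<in> skew_set nu n}" if "nu \<in> plus_one mu" for nu
    using that by (auto simp: skew_set_def plus_one_def intro: contains_trans)
  have nset: "{nu \<in> plus_one mu. lam \<in> skew_set nu n} = {nu \<in> plus_one mu. contains lam nu}"
    if "lam \<in> skew_set mu (Suc n)" for lam
    using that by (auto simp: skew_set_def plus_one_def)
  have "(\<Sum>nu\<in>plus_one mu. cw mu nu * weighted_sum g nu n)
     = (\<Sum>nu\<in>plus_one mu. \<Sum>lam\<in>{lam \<in> skew_set mu (Suc n). lam \<in> skew_set nu n}.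
           cw mu nu * (w lam nu * of_nat (f_skew lam nu) * g lam))"
    unfolding wsum sum_distrib_left using sset by (intro sum.cong) auto
  also have "\<dots> = (\<Sum>lam\<in>skew_set mu (Suc n). \<Sum>nu\<in>{nu \<in> plus_one mu. lam \<in> skew_set nu n}.
           cw mu nu * (w lam nu * of_nat (f_skew lam nu) * g lam))"
    by (rule sum.swap_restrict[OF finite_plus_one finite_skew_set])
  also have "\<dots> = (\<Sum>lam\<in>skew_set mu (Suc n). w lam mu * g lam *
           of_nat (\<Sum>nu\<in>{nu \<in> plus_one mu. contains lam nu}. f_skew lam nu))"
  proof (rule sum.cong[OF refl])
    fix lam assume lam: "lam \<in> skew_set mu (Suc n)"
    show "(\<Sum>nu\<in>{nu \<in> plus_one mu. lam \<in> skew_set nu n}. cw mu nu * (w lam nu * of_nat (f_skew lam nu) * g lam))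
       = w lam mu * g lam * of_nat (\<Sum>nu\<in>{nu \<in> plus_one mu. contains lam nu}. f_skew lam nu)"
      unfolding nset[OF lam] of_nat_sum sum_distrib_left
    proof (rule sum.cong[OF refl])
      fix nu
      have "cw mu nu * (w lam nu * of_nat (f_skew lam nu) * g lam) = (cw mu nu * w lam nu) * g lam * of_nat (f_skew lam nu)"
        by (simp add: algebra_simps)
      thus "cw mu nu * (w lam nu * of_nat (f_skew lam nu) * g lam) = w lam mu * g lam * of_nat (f_skew lam nu)"
        by (simp add: cww)
    qed
  qed
  also have "\<dots> = (\<Sum>lam\<in>skew_set mu (Suc n). w lam mu * of_nat (f_skew lam mu) * g lam)"
  proof (rule sum.cong[OF refl])
    fix lam assume lam: "lam \<in> skew_set mu (Suc n)"
    hence "strict_part lam" "contains lam mu" "psize mu < psize lam" by (auto simp: skew_set_def)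
    from fskew_rec[OF this(1) s this(2,3)] show "w lam mu * g lam *
           of_nat (\<Sum>nu\<in>{nu \<in> plus_one mu. contains lam nu}. f_skew lam nu) = w lam mu * of_nat (f_skew lam mu) * g lam"
      by simp
  qed
  finally show ?thesis by (simp add: wsum)
qed



definition Eop :: "(nat list \<Rightarrow> complex) \<Rightarrow> nat list \<Rightarrow> complex" where
  "Eop h x = Dop h x + h x"

lemma W_E: "strict_part mu \<Longrightarrow> weighted_sum g mu n = (Eop ^^ n) g mu"
proof (induction n arbitrary: mu)
  case 0 thus ?case by (simp add: W0)
next
  case (Suc n)
  have "weighted_sum g mu (Suc n) = (\<Sum>nu\<in>plus_one mu. cw mu nu * weighted_sum g nu n)"
    by (rule W_suc[OF Suc.prems])
  also have "\<dots> = (\<Sum>nu\<in>plus_one mu. cw mu nu * (Eop ^^ n) g nu)"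
    by (rule sum.cong[OF refl]) (simp add: Suc.IH plus_one_def)
  also have "\<dots> = Eop ((Eop ^^ n) g) mu" unfolding Eop_def by (rule E_rep[OF Suc.prems, symmetric])
  finally show ?case by simp
qed

lemma Dop_lin: "Dop (\<lambda>x. a * h1 x + b * h2 x) = (\<lambda>x. a * Dop h1 x + b * Dop h2 x)"
  by (rule ext) (simp add: Dop_def sum.distrib sum_distrib_left algebra_simps)

lemma Dop_pow_lin: "(Dop ^^ k) (\<lambda>x. a * h1 x + b * h2 x) = (\<lambda>x. a * (Dop ^^ k) h1 x + b * (Dop ^^ k) h2 x)"
  by (induction k) (simp_all add: Dop_lin)

lemma Eop_lin: "Eop (\<lambda>x. a * h1 x + b * h2 x) = (\<lambda>x. a * Eop h1 x + b * Eop h2 x)"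
  by (rule ext) (simp add: Eop_def Dop_lin algebra_simps)

lemma Eop_pow_lin: "(Eop ^^ k) (\<lambda>x. a * h1 x + b * h2 x) = (\<lambda>x. a * (Eop ^^ k) h1 x + b * (Eop ^^ k) h2 x)"
  by (induction k) (simp_all add: Eop_lin)

lemma binom_step:
  fixes s :: "nat \<Rightarrow> complex" and a :: complex
  shows "(\<Sum>k\<le>n. of_nat (n choose k) * a ^ (n - k) * s (Suc k))
       + a * (\<Sum>k\<le>n. of_nat (n choose k) * a ^ (n - k) * s k)
       = (\<Sum>k\<le>Suc n. of_nat (Suc n choose k) * a ^ (Suc n - k) * s k)"
proof -
  have A: "a * (\<Sum>k\<le>n. of_nat (n choose k) * a ^ (n - k) * s k)
      = a ^ Suc n * s 0 + (\<Sum>k\<le>n. of_nat (n choose Suc k) * a ^ (n - k) * s (Suc k))"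
  proof -
    have "a * (\<Sum>k\<le>n. of_nat (n choose k) * a ^ (n - k) * s k)
        = (\<Sum>k<Suc n. of_nat (n choose k) * a ^ (Suc n - k) * s k)"
      unfolding sum_distrib_left lessThan_Suc_atMost
      by (rule sum.cong[OF refl]) (simp add: Suc_diff_le algebra_simps)
    also have "\<dots> = a ^ Suc n * s 0 + (\<Sum>k<n. of_nat (n choose Suc k) * a ^ (n - k) * s (Suc k))"
      by (subst sum.lessThan_Suc_shift) simp
    also have "(\<Sum>k<n. of_nat (n choose Suc k) * a ^ (n - k) * s (Suc k))
        = (\<Sum>k\<le>n. of_nat (n choose Suc k) * a ^ (n - k) * s (Suc k))"
      by (simp add: lessThan_Suc_atMost[symmetric])
    finally show ?thesis .
  qed
  have B: "(\<Sum>k\<le>Suc n. of_nat (Suc n choose k) * a ^ (Suc n - k) * s k)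
      = a ^ Suc n * s 0 + (\<Sum>k\<le>n. (of_nat (n choose k) + of_nat (n choose Suc k)) * a ^ (n - k) * s (Suc k))"
    unfolding atMost_Suc_eq_insert_0 by (simp add: sum.reindex algebra_simps)
  show ?thesis unfolding A B by (simp add: sum.distrib algebra_simps)
qed



lemma E_binom: "(Eop ^^ n) h x = (\<Sum>k\<le>n. of_nat (n choose k) * 1 ^ (n - k) * (Dop ^^ k) h x)"
proof (induction n arbitrary: h)
  case 0 thus ?case by simp
next
  case (Suc n)
  have eh: "Eop h = (\<lambda>x. 1 * Dop h x + 1 * h x)" by (rule ext) (simp add: Eop_def)
  have dk: "(Dop ^^ k) (Eop h) x = (Dop ^^ Suc k) h x + (Dop ^^ k) h x" for k
    unfolding eh Dop_pow_lin by (simp add: funpow_Suc_right del: funpow.simps)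
  have "(Eop ^^ Suc n) h x = (Eop ^^ n) (Eop h) x" by (simp add: funpow_Suc_right del: funpow.simps)
  also have "\<dots> = (\<Sum>k\<le>n. of_nat (n choose k) * 1 ^ (n - k) * (Dop ^^ Suc k) h x)
     + 1 * (\<Sum>k\<le>n. of_nat (n choose k) * 1 ^ (n - k) * (Dop ^^ k) h x)"
    unfolding Suc.IH dk by (simp add: sum.distrib algebra_simps)
  also have "\<dots> = (\<Sum>k\<le>Suc n. of_nat (Suc n choose k) * 1 ^ (Suc n - k) * (Dop ^^ k) h x)"
    by (rule binom_step[where s = "\<lambda>k. (Dop ^^ k) h x"])
  finally show ?case .
qed

lemma D_binom: "(Dop ^^ n) h x = (\<Sum>k\<le>n. of_nat (n choose k) * (-1) ^ (n - k) * (Eop ^^ k) h x)"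
proof (induction n arbitrary: h)
  case 0 thus ?case by simp
next
  case (Suc n)
  have dh: "Dop h = (\<lambda>x. 1 * Eop h x + (-1) * h x)" by (rule ext) (simp add: Eop_def)
  have ek: "(Eop ^^ k) (Dop h) x = (Eop ^^ Suc k) h x - (Eop ^^ k) h x" for k
    unfolding dh Eop_pow_lin by (simp add: funpow_Suc_right del: funpow.simps)
  have "(Dop ^^ Suc n) h x = (Dop ^^ n) (Dop h) x" by (simp add: funpow_Suc_right del: funpow.simps)
  also have "\<dots> = (\<Sum>k\<le>n. of_nat (n choose k) * (-1) ^ (n - k) * (Eop ^^ Suc k) h x)
     + (-1) * (\<Sum>k\<le>n. of_nat (n choose k) * (-1) ^ (n - k) * (Eop ^^ k) h x)"
    unfolding Suc.IH ek by (simp only: right_diff_distrib sum_subtractf) simp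
  also have "\<dots> = (\<Sum>k\<le>Suc n. of_nat (Suc n choose k) * (-1) ^ (Suc n - k) * (Eop ^^ k) h x)"
    by (rule binom_step[where s = "\<lambda>k. (Eop ^^ k) h x"])
  finally show ?case .
qed

lemma Dop_vanish: "(\<And>y. strict_part y \<Longrightarrow> h y = 0) \<Longrightarrow> strict_part x \<Longrightarrow> Dop h x = 0"
  unfolding Dop_def plus_one_def by simp

lemma Dop_pow_vanish: "(\<And>y. strict_part y \<Longrightarrow> h y = 0) \<Longrightarrow> strict_part x \<Longrightarrow> (Dop ^^ j) h x = 0"
proof (induction j arbitrary: x)
  case 0 thus ?case by simp
next
  case (Suc j)
  show ?case using Dop_vanish[of "(Dop ^^ j) h" x] Suc by simp
qed

definition bpoly :: "nat \<Rightarrow> complex poly" where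
  "bpoly k = smult (1 / fact k) (\<Prod>i<k. [:- of_nat i, 1:])"

lemma bpoly_eval: "poly (bpoly k) (of_nat n) = of_nat (n choose k)"
proof -
  have "poly (bpoly k) (of_nat n) = (\<Prod>i<k. of_nat n - of_nat i) / fact k"
    by (simp add: bpoly_def poly_prod)
  also have "\<dots> = (of_nat n gchoose k)"
    by (simp add: gbinomial_prod_rev atLeast0LessThan)
  also have "\<dots> = of_nat (n choose k)" by (simp add: binomial_gbinomial)
  finally show ?thesis .
qed

lemma bpoly_degree: "degree (bpoly k) \<le> k"
proof -
  have "degree (\<Prod>i<k. [:- of_nat i, 1::complex:]) \<le> sum (degree \<circ> (\<lambda>i. [:- of_nat i, 1::complex:])) {..<k}"
    by (rule degree_prod_sum_le) simp
  also have "\<dots> = k" by simp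
  finally show ?thesis unfolding bpoly_def using degree_smult_le order_trans by blast
qed



lemma neg1_pow: "k \<le> n \<Longrightarrow> (-1::complex) ^ (n + k) = (-1) ^ (n - k)"
proof -
  assume "k \<le> n"
  hence e: "n + k = (n - k) + 2 * k" by simp
  have "(-1::complex) ^ (n + k) = (-1) ^ (n - k) * ((-1) ^ 2) ^ k"
    unfolding e power_add power_mult ..
  thus ?thesis by simp
qed

theorem theorem2p3:
  fixes g :: "nat list \<Rightarrow> complex" and mu :: "nat list"
  assumes "strict_part mu"
  shows "(\<forall>n. weighted_sum g mu n
               = (\<Sum>k=0..n. of_nat (n choose k) * (Dop ^^ k) g mu))
       \<and> (\<forall>n. (Dop ^^ n) g mu
               = (\<Sum>k=0..n. (-1) ^ (n + k) * of_nat (n choose k) * weighted_sum g mu k))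
       \<and> (\<forall>r::nat. r > 0 \<longrightarrow> (\<forall>lam. strict_part lam \<longrightarrow> (Dop ^^ r) g lam = 0)
            \<longrightarrow> (\<exists>p :: complex poly. degree p \<le> r - 1
                   \<and> (\<forall>n. weighted_sum g mu n = poly p (of_nat n))))"
proof (intro conjI allI impI)
  fix n
  show P1: "weighted_sum g mu n = (\<Sum>k=0..n. of_nat (n choose k) * (Dop ^^ k) g mu)"
    using W_E[OF assms] E_binom[of n g mu] by (simp add: atLeast0AtMost)
next
  fix n
  have "(Dop ^^ n) g mu = (\<Sum>k\<le>n. of_nat (n choose k) * (-1) ^ (n - k) * (Eop ^^ k) g mu)"
    by (rule D_binom)
  also have "\<dots> = (\<Sum>k=0..n. (-1) ^ (n + k) * of_nat (n choose k) * weighted_sum g mu k)"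
    unfolding atLeast0AtMost
    by (rule sum.cong[OF refl]) (simp add: W_E[OF assms] neg1_pow)
  finally show "(Dop ^^ n) g mu = (\<Sum>k=0..n. (-1) ^ (n + k) * of_nat (n choose k) * weighted_sum g mu k)" .
next
  fix r :: nat
  assume r: "r > 0" and van: "\<forall>lam. strict_part lam \<longrightarrow> (Dop ^^ r) g lam = 0"
  define d where "d k = (Dop ^^ k) g mu" for k
  have d0: "d k = 0" if "k \<ge> r" for k
  proof -
    have "(Dop ^^ (k - r + r)) g mu = (Dop ^^ (k - r)) ((Dop ^^ r) g) mu"
      by (simp add: funpow_add)
    also have "\<dots> = 0" by (rule Dop_pow_vanish) (use van assms in auto)
    finally show ?thesis using that by (simp add: d_def)
  qed
  define p where "p = (\<Sum>k<r. smult (d k) (bpoly k))"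
  have "degree p \<le> r - 1" unfolding p_def
  proof (rule degree_sum_le)
    fix k assume "k \<in> {..<r}"
    hence "k \<le> r - 1" by auto
    thus "degree (smult (d k) (bpoly k)) \<le> r - 1"
      using degree_smult_le[of "d k" "bpoly k"] bpoly_degree[of k] by linarith
  qed simp
  moreover have "weighted_sum g mu n = poly p (of_nat n)" for n
  proof -
    have "weighted_sum g mu n = (\<Sum>k\<le>n. of_nat (n choose k) * d k)"
      using W_E[OF assms] E_binom[of n g mu] by (simp add: d_def)
    also have "\<dots> = (\<Sum>k\<in>{..n} \<union> {..<r}. of_nat (n choose k) * d k)"
      by (rule sum.mono_neutral_left) (auto simp: d0)
    also have "\<dots> = (\<Sum>k<r. of_nat (n choose k) * d k)"
      by (rule sum.mono_neutral_right) (auto simp: d0)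
    also have "\<dots> = poly p (of_nat n)"
      by (simp add: p_def poly_sum bpoly_eval mult.commute)
    finally show ?thesis .
  qed
  ultimately show "\<exists>p :: complex poly. degree p \<le> r - 1 \<and> (\<forall>n. weighted_sum g mu n = poly p (of_nat n))"
    by blast
qed

end
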